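(* Let $r\ge 3$ and $n\ge 2$ be integers and let $|X_\ell|=n$ for all $1\le\ell\le r$. Let $\mathcal F\subseteq X_1\times\dots\times X_r$ be coordinate-wise shifted and non-trivial intersecting, and of maximum size among all coordinate-wise shifted non-trivial intersecting families in $X_1\times\dots\times X_r$. Then $$|\mathcal F|\le n^{r-1}-(n-1)^{r-1}+n-1.$$
   Context: Let $X_\ell=[n]$ for $1\le \ell\le r$. For $A,B\in X_1\times\dots\times X_r$, write $A\cap B=\{\ell:A[\ell]=B[\ell]\}$ ($A[\ell]$ the $\ell$-th coordinate). $\mathcal F$ is intersecting if $|A\cap B|\ge 1$ for all $A,B\in\mathcal F$; it is non-trivial if there is no coordinate $\ell$ on which all members of $\mathcal F$ agree. For $1\le\ell\le r$ and $1<j\le n$, the shift $S^{(\ell)}_j$ acts on $F\in\mathcal F$ by: if $F[\ell]=j$ and the sequence $F'$ obtained from $F$ by replacing its $\ell$-th coordinate by $1$ is not in $\mathcal F$, then $S^{(\ell)}_j(F)=F'$; otherwise $S^{(\ell)}_j(F)=F$; $S^{(\ell)}_j(\mathcal F)=\{S^{(\ell)}_j(F):F\in\mathcal F\}$. $\mathcal F$ is coordinate-wise shifted if $S^{(\ell)}_j(\mathcal F)=\mathcal F$ for all $1\le\ell\le r$ and all $1<j\le n$. *)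

theory Defs
  imports "HOL-Library.FuncSet"
begin

text \<open>Sequences in X_1 x ... x X_r with X_l = [n] = {1..n}, represented as
  extensional functions on the coordinate set {1..r}.\<close>
definition cube :: "nat \<Rightarrow> nat \<Rightarrow> (nat \<Rightarrow> nat) set" where
  "cube r n = PiE {1..r} (\<lambda>_. {1..n})"

definition intersecting :: "nat \<Rightarrow> (nat \<Rightarrow> nat) set \<Rightarrow> bool" where
  "intersecting r F \<longleftrightarrow> (\<forall>A\<in>F. \<forall>B\<in>F. \<exists>l\<in>{1..r}. A l = B l)"

definition nontrivial :: "nat \<Rightarrow> (nat \<Rightarrow> nat) set \<Rightarrow> bool" where
  "nontrivial r F \<longleftrightarrow> \<not> (\<exists>l\<in>{1..r}. \<forall>A\<in>F. \<forall>B\<in>F. A l = B l)"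

definition shift :: "nat \<Rightarrow> nat \<Rightarrow> (nat \<Rightarrow> nat) set \<Rightarrow> (nat \<Rightarrow> nat) \<Rightarrow> (nat \<Rightarrow> nat)" where
  "shift l j F A = (if A l = j \<and> A(l := 1) \<notin> F then A(l := 1) else A)"

definition shift_family :: "nat \<Rightarrow> nat \<Rightarrow> (nat \<Rightarrow> nat) set \<Rightarrow> (nat \<Rightarrow> nat) set" where
  "shift_family l j F = shift l j F ` F"

definition cw_shifted :: "nat \<Rightarrow> nat \<Rightarrow> (nat \<Rightarrow> nat) set \<Rightarrow> bool" where
  "cw_shifted r n F \<longleftrightarrow> (\<forall>l\<in>{1..r}. \<forall>j\<in>{2..n}. shift_family l j F = F)"

end

theory Submission
  imports Defs "HOL-Combinatorics.Permutations"
begin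


definition cd :: "nat \<Rightarrow> nat \<Rightarrow> nat \<Rightarrow> nat" where
  "cd d s x = (if s \<le> x then x - s else x + d - s)"

definition arc :: "nat \<Rightarrow> nat \<Rightarrow> nat \<Rightarrow> nat set" where
  "arc d s k = {x. x < d \<and> cd d s x < k}"

lemma cd_lt: "s < d \<Longrightarrow> x < d \<Longrightarrow> cd d s x < d"
  unfolding cd_def by auto

lemma cd_inj: "s < d \<Longrightarrow> x < d \<Longrightarrow> y < d \<Longrightarrow> cd d s x = cd d s y \<Longrightarrow> x = y"
  unfolding cd_def by (auto split: if_splits)

lemma card_arc:
  assumes "s < d" "k \<le> d" shows "card (arc d s k) = k"
proof -
  have "bij_betw (cd d s) (arc d s k) {0..<k}"
  proof (rule bij_betw_imageI)
    show "inj_on (cd d s) (arc d s k)" unfolding inj_on_def arc_def using cd_inj assms by auto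
    show "cd d s ` arc d s k = {0..<k}"
    proof
      show "cd d s ` arc d s k \<subseteq> {0..<k}" unfolding arc_def by auto
      show "{0..<k} \<subseteq> cd d s ` arc d s k"
      proof
        fix i assume i: "i \<in> {0..<k}"
        define x where "x = (if s + i < d then s + i else s + i - d)"
        have "x < d" "cd d s x = i" using i assms unfolding x_def cd_def by auto
        then show "i \<in> cd d s ` arc d s k" unfolding arc_def using i by force
      qed
    qed
  qed
  then show ?thesis by (simp add: bij_betw_same_card)
qed

lemma arc_cover:
  assumes "s < d" "s' < d" "d - k \<le> cd d s s'" "cd d s s' \<le> k" "k \<le> d"
  shows "arc d s k \<union> arc d s' k = {..<d}"
  using assms unfolding arc_def cd_def by (auto split: if_splits)

lemma cd_tri: "s < d \<Longrightarrow> x < d \<Longrightarrow> y < d \<Longrightarrow> cd d s y \<le> cd d s x + cd d x y"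
  unfolding cd_def by auto

lemma katona_circle:
  assumes S: "S \<subseteq> {..<d}" and u: "0 < u" "2 * u \<le> d"
    and H: "\<And>s s'. s \<in> S \<Longrightarrow> s' \<in> S \<Longrightarrow> \<not> (u \<le> cd d s s' \<and> cd d s s' \<le> d - u)"
  shows "card S \<le> u"
proof (cases "S = {}")
  case True then show ?thesis by simp
next
  case False
  then obtain a where a: "a \<in> S" by blast
  define \<phi> where "\<phi> x = (if cd d a x < u then cd d a x else cd d a x + u - d)" for x
  have ad: "a < d" using a S by auto
  have "inj_on \<phi> S"
  proof (rule inj_onI)
    fix x y assume x: "x \<in> S" and y: "y \<in> S" and e: "\<phi> x = \<phi> y"
    have xd: "x < d" and yd: "y < d" using x y S by auto
    have hx: "\<not> (u \<le> cd d a x \<and> cd d a x \<le> d - u)" using H a x by blast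
    have hy: "\<not> (u \<le> cd d a y \<and> cd d a y \<le> d - u)" using H a y by blast
    have hxy: "\<not> (u \<le> cd d x y \<and> cd d x y \<le> d - u)" using H x y by blast
    have hyx: "\<not> (u \<le> cd d y x \<and> cd d y x \<le> d - u)" using H x y by blast
    show "x = y"
      using e hx hy hxy hyx xd yd ad u unfolding \<phi>_def cd_def by (auto split: if_splits)
  qed
  moreover have "\<phi> ` S \<subseteq> {..<u}"
  proof
    fix z assume "z \<in> \<phi> ` S"
    then obtain x where x: "x \<in> S" and z: "z = \<phi> x" by auto
    have "cd d a x < d" using cd_lt ad x S by auto
    then show "z \<in> {..<u}" using z u unfolding \<phi>_def by auto
  qed
  ultimately show ?thesis using card_inj_on_le[of \<phi> S "{..<u}"] by auto
qed



definition nxt :: "nat \<Rightarrow> nat \<Rightarrow> nat" where "nxt d x = (if x + 1 < d then x + 1 else 0)"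

lemma closed_all:
  assumes "s \<in> U" "s < d" "\<And>x. x \<in> U \<Longrightarrow> x < d \<Longrightarrow> nxt d x \<in> U"
  shows "{..<d} \<subseteq> U"
proof -
  have "\<forall>i<d. (if s + i < d then s + i else s + i - d) \<in> U"
  proof (intro allI impI)
    fix i assume "i < d" then show "(if s + i < d then s + i else s + i - d) \<in> U"
    proof (induction i)
      case 0 then show ?case using assms by simp
    next
      case (Suc i)
      then have "(if s + i < d then s + i else s + i - d) \<in> U" by simp
      moreover have "(if s + i < d then s + i else s + i - d) < d" using Suc.prems assms by auto
      ultimately have "nxt d (if s + i < d then s + i else s + i - d) \<in> U" using assms(3) by blast
      moreover have "nxt d (if s + i < d then s + i else s + i - d) = (if s + Suc i < d then s + Suc i else s + Suc i - d)"
        using Suc.prems assms unfolding nxt_def by auto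
      ultimately show ?case by simp
    qed
  qed
  then show ?thesis
  proof (intro subsetI)
    fix x assume x: "x \<in> {..<d}"
    define i where "i = cd d s x"
    have "i < d" using cd_lt assms x i_def by auto
    moreover have "(if s + i < d then s + i else s + i - d) = x" using x assms unfolding i_def cd_def by auto
    ultimately show "x \<in> U" using \<open>\<forall>i<d. _\<close> by metis
  qed
qed

lemma sumset:
  assumes S: "S \<subseteq> {..<d}" "S \<noteq> {}"
  shows "min d (card S + g) \<le> card {x. x < d \<and> (\<exists>s\<in>S. cd d s x \<le> g)}"
proof (induction g)
  case 0
  have "S \<subseteq> {x. x < d \<and> (\<exists>s\<in>S. cd d s x \<le> 0)}" using S unfolding cd_def by auto
  then have "card S \<le> card {x. x < d \<and> (\<exists>s\<in>S. cd d s x \<le> 0)}" by (intro card_mono) auto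
  then show ?case by simp
next
  case (Suc g)
  define U where "U = {x. x < d \<and> (\<exists>s\<in>S. cd d s x \<le> g)}"
  define V where "V = {x. x < d \<and> (\<exists>s\<in>S. cd d s x \<le> Suc g)}"
  have UV: "U \<subseteq> V" unfolding U_def V_def using le_SucI by blast
  have fV: "finite V" unfolding V_def by auto
  show ?case
  proof (cases "{..<d} \<subseteq> U")
    case True
    then have "{..<d} \<subseteq> V" using UV by auto
    then have "card {..<d} \<le> card V" by (rule card_mono[OF fV])
    then have "d \<le> card V" by simp
    then show ?thesis unfolding V_def by simp
  next
    case False
    obtain s where s: "s \<in> S" using S by auto
    have sd: "s < d" using s S by auto
    have "cd d s s = 0" by (simp add: cd_def)
    then have "s \<in> U" using s sd unfolding U_def by force
    have "\<not> (\<forall>x. x \<in> U \<longrightarrow> x < d \<longrightarrow> nxt d x \<in> U)"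
    proof
      assume "\<forall>x. x \<in> U \<longrightarrow> x < d \<longrightarrow> nxt d x \<in> U"
      then have "{..<d} \<subseteq> U" using closed_all[of s U d] \<open>s \<in> U\<close> sd by blast
      then show False using False by simp
    qed
    then obtain x where x: "x \<in> U" "x < d" "nxt d x \<notin> U" by blast
    have "nxt d x \<in> V"
    proof -
      obtain t where t: "t \<in> S" "cd d t x \<le> g" using x unfolding U_def by auto
      have "t < d" using t S by auto
      then have "cd d t (nxt d x) \<le> Suc g" using t x unfolding cd_def nxt_def by (auto split: if_splits)
      moreover have "nxt d x < d" using x unfolding nxt_def by auto
      ultimately show ?thesis unfolding V_def using t by auto
    qed
    then have "insert (nxt d x) U \<subseteq> V" using UV by auto
    then have "card (insert (nxt d x) U) \<le> card V" using card_mono[OF fV] by blast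
    moreover have "finite U" unfolding U_def by simp
    then have "card (insert (nxt d x) U) = Suc (card U)" using x(3) by simp
    ultimately have "Suc (card U) \<le> card V" by simp
    then show ?thesis using Suc.IH unfolding U_def V_def by simp
  qed
qed



lemma exists_perm_image:
  assumes X: "finite X" and B: "B \<subseteq> X" and B': "B' \<subseteq> X" and c: "card B = card B'"
  shows "\<exists>\<tau>. \<tau> permutes X \<and> \<tau> ` B = B'"
proof -
  have fB: "finite B" "finite B'" using X B B' finite_subset by auto
  obtain f where f: "bij_betw f B B'" using finite_same_card_bij[OF fB c] by blast
  have "card (X - B) = card (X - B')" using c B B' X fB by (simp add: card_Diff_subset)
  then obtain g where g: "bij_betw g (X - B) (X - B')"
    using finite_same_card_bij[of "X - B" "X - B'"] X by blast
  define \<tau> where "\<tau> x = (if x \<in> B then f x else if x \<in> X then g x else x)" for x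
  have b1: "bij_betw \<tau> B B'" using f unfolding \<tau>_def by (rule bij_betw_cong[THEN iffD1, rotated]) auto
  have b2: "bij_betw \<tau> (X - B) (X - B')" using g unfolding \<tau>_def by (rule bij_betw_cong[THEN iffD1, rotated]) auto
  have "bij_betw \<tau> (B \<union> (X - B)) (B' \<union> (X - B'))" by (rule bij_betw_combine[OF b1 b2]) auto
  moreover have "B \<union> (X - B) = X" "B' \<union> (X - B') = X" using B B' by auto
  ultimately have "bij_betw \<tau> X X" by simp
  then have "\<tau> permutes X" by (rule bij_imp_permutes) (auto simp: \<tau>_def B[THEN subsetD])
  moreover have "\<tau> ` B = B'" using b1 by (simp add: bij_betw_def)
  ultimately show ?thesis by blast
qed

lemma fiber_le:
  assumes X: "finite X" and B: "B \<subseteq> X" and B': "B' \<subseteq> X" and c: "card B = card B'"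
  shows "card {p. p permutes X \<and> p ` Y = B} \<le> card {p. p permutes X \<and> p ` Y = B'}"
proof -
  obtain \<tau> where t: "\<tau> permutes X" "\<tau> ` B = B'" using exists_perm_image[OF X B B' c] by blast
  have "inj_on (\<lambda>p. \<tau> \<circ> p) {p. p permutes X \<and> p ` Y = B}"
  proof (rule inj_onI)
    fix p q assume "\<tau> \<circ> p = \<tau> \<circ> q"
    then have "\<And>x. \<tau> (p x) = \<tau> (q x)" by (metis comp_apply)
    then show "p = q" using permutes_inj[OF t(1)] by (auto simp: inj_def)
  qed
  moreover have "(\<lambda>p. \<tau> \<circ> p) ` {p. p permutes X \<and> p ` Y = B} \<subseteq> {p. p permutes X \<and> p ` Y = B'}"
    using t by (auto simp: permutes_compose image_comp[symmetric])
  moreover have "finite {p. p permutes X \<and> p ` Y = B'}"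
    using finite_permutations[OF X] by (rule finite_subset[rotated]) auto
  ultimately show ?thesis by (rule card_inj_on_le)
qed

lemma fiber_count:
  assumes X: "finite X" and Y: "Y \<subseteq> X" "card Y = k" and B: "B \<subseteq> X" "card B = k"
  shows "card {p. p permutes X \<and> p ` Y = B} * (card X choose k) = fact (card X)"
proof -
  define K where "K = {B''. B'' \<subseteq> X \<and> card B'' = k}"
  define c where "c B'' = card {p. p permutes X \<and> p ` Y = B''}" for B''
  have ceq: "c B'' = c B" if "B'' \<in> K" for B''
    using that fiber_le[OF X, of B'' B Y] fiber_le[OF X, of B B'' Y] B unfolding K_def c_def by fastforce
  have fK: "finite K" unfolding K_def using X by auto
  have U: "{p. p permutes X} = (\<Union>B''\<in>K. {p. p permutes X \<and> p ` Y = B''})"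
  proof (intro equalityI subsetI)
    fix p assume p: "p \<in> {p. p permutes X}"
    then have "p ` Y \<subseteq> X" using Y permutes_image[of p X] by auto
    moreover have "card (p ` Y) = k" using Y p permutes_inj[of p X] by (simp add: card_image inj_on_subset)
    ultimately show "p \<in> (\<Union>B''\<in>K. {p. p permutes X \<and> p ` Y = B''})" using p unfolding K_def by auto
  qed auto
  have "fact (card X) = card {p. p permutes X}" using card_permutations[OF refl X] by simp
  also have "\<dots> = (\<Sum>B''\<in>K. c B'')" unfolding U c_def
    by (rule card_UN_disjoint[OF fK]) (auto intro: finite_subset[OF _ finite_permutations[OF X]])
  also have "\<dots> = (\<Sum>B''\<in>K. c B)" using ceq by (rule sum.cong[OF refl])
  also have "\<dots> = card K * c B" by simp
  also have "card K = card X choose k" unfolding K_def by (rule n_subsets[OF X])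
  finally show ?thesis unfolding c_def by simp
qed



lemma card_filter_sum: "finite A \<Longrightarrow> card {x\<in>A. P x} = (\<Sum>x\<in>A. if P x then 1 else 0 :: nat)"
  by (simp add: sum.If_cases Int_def conj_commute)

lemma level_count:
  assumes X: "finite X" and Bsub: "\<B> \<subseteq> Pow X" and Y: "Y \<subseteq> X" "card Y = l"
  shows "card {p. p permutes X \<and> p ` Y \<in> \<B>} * (card X choose l) = card {B\<in>\<B>. card B = l} * fact (card X)"
proof -
  define L where "L = {B\<in>\<B>. card B = l}"
  have fB: "finite \<B>" using finite_subset[OF Bsub] X by simp
  have fL: "finite L" unfolding L_def using fB by simp
  have U: "{p. p permutes X \<and> p ` Y \<in> \<B>} = (\<Union>B\<in>L. {p. p permutes X \<and> p ` Y = B})"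
  proof (intro equalityI subsetI)
    fix p assume p: "p \<in> {p. p permutes X \<and> p ` Y \<in> \<B>}"
    have "card (p ` Y) = l" using Y p permutes_inj[of p X] by (simp add: card_image inj_on_subset)
    then show "p \<in> (\<Union>B\<in>L. {p. p permutes X \<and> p ` Y = B})" using p unfolding L_def by auto
  qed (auto simp: L_def)
  have "card {p. p permutes X \<and> p ` Y \<in> \<B>} = (\<Sum>B\<in>L. card {p. p permutes X \<and> p ` Y = B})"
    unfolding U by (rule card_UN_disjoint[OF fL]) (auto intro: finite_subset[OF _ finite_permutations[OF X]])
  then have "card {p. p permutes X \<and> p ` Y \<in> \<B>} * (card X choose l) = (\<Sum>B\<in>L. card {p. p permutes X \<and> p ` Y = B} * (card X choose l))"
    by (simp add: sum_distrib_right)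
  also have "\<dots> = (\<Sum>B\<in>L. fact (card X))"
    by (rule sum.cong[OF refl], rule fiber_count[OF X Y]) (use Bsub in \<open>auto simp: L_def\<close>)
  finally show ?thesis unfolding L_def by simp
qed

lemma double_count:
  assumes X: "finite X" "card X = d" and Bsub: "\<B> \<subseteq> Pow X" and e: "bij_betw e {..<d} X" and l: "l \<le> d"
  shows "(\<Sum>p\<in>{p. p permutes X}. card {s. s < d \<and> p ` e ` arc d s l \<in> \<B>}) * (d choose l)
         = d * (card {B\<in>\<B>. card B = l} * fact d)"
proof -
  have fP: "finite {p. p permutes X}" using finite_permutations[OF X(1)] .
  have Yc: "e ` arc d s l \<subseteq> X \<and> card (e ` arc d s l) = l" if "s < d" for s
  proof
    have "arc d s l \<subseteq> {..<d}" unfolding arc_def by auto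
    then show "e ` arc d s l \<subseteq> X" using e by (auto simp: bij_betw_def)
    have "inj_on e (arc d s l)" using e \<open>arc d s l \<subseteq> {..<d}\<close> by (meson bij_betw_def inj_on_subset)
    then show "card (e ` arc d s l) = l" using card_arc[OF that l] by (simp add: card_image)
  qed
  have "(\<Sum>p\<in>{p. p permutes X}. card {s. s < d \<and> p ` e ` arc d s l \<in> \<B>})
      = (\<Sum>p\<in>{p. p permutes X}. \<Sum>s\<in>{..<d}. if p ` e ` arc d s l \<in> \<B> then 1 else 0)"
    by (rule sum.cong[OF refl]) (simp add: card_filter_sum[symmetric] lessThan_def conj_commute)
  also have "\<dots> = (\<Sum>s\<in>{..<d}. \<Sum>p\<in>{p. p permutes X}. if p ` e ` arc d s l \<in> \<B> then 1 else 0)"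
    by (rule sum.swap)
  also have "\<dots> = (\<Sum>s\<in>{..<d}. card {p. p permutes X \<and> p ` e ` arc d s l \<in> \<B>})"
    by (rule sum.cong[OF refl]) (simp add: card_filter_sum[OF fP, symmetric])
  finally have eq: "(\<Sum>p\<in>{p. p permutes X}. card {s. s < d \<and> p ` e ` arc d s l \<in> \<B>}) =
      (\<Sum>s\<in>{..<d}. card {p. p permutes X \<and> p ` e ` arc d s l \<in> \<B>})" .
  have "(\<Sum>s\<in>{..<d}. card {p. p permutes X \<and> p ` e ` arc d s l \<in> \<B>}) * (d choose l)
      = (\<Sum>s\<in>{..<d}. card {p. p permutes X \<and> p ` e ` arc d s l \<in> \<B>} * (d choose l))"
    by (simp add: sum_distrib_right)
  also have "\<dots> = (\<Sum>s\<in>{..<d}. card {B\<in>\<B>. card B = l} * fact d)"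
    by (rule sum.cong[OF refl]) (use level_count[OF X(1) Bsub] Yc X(2) in auto)
  finally show ?thesis unfolding eq by simp
qed

lemma per_perm_arith:
  fixes S T d k j :: nat
  assumes "S \<le> d - k" "min d (S + (k - j)) \<le> T" "j + k + 1 = d" "d \<le> 2 * k"
  shows "(k + 1) * S \<le> (d - k) * T"
proof (cases "d \<le> S + (k - j)")
  case True
  then have "d \<le> T" using assms by simp
  have "(k + 1) * S \<le> (k + 1) * (d - k)" using assms(1) by (rule mult_le_mono2)
  also have "\<dots> \<le> d * (d - k)" using assms by (intro mult_le_mono1) simp
  also have "\<dots> \<le> T * (d - k)" using \<open>d \<le> T\<close> by simp
  finally show ?thesis by (simp add: mult.commute)
next
  case False
  then have T: "S + (k - j) \<le> T" using assms by simp
  have kk: "k + 1 = (d - k) + (k - j)" using assms by simp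
  have "(k + 1) * S = (d - k) * S + (k - j) * S" unfolding kk by (simp add: algebra_simps)
  also have "\<dots> \<le> (d - k) * S + (k - j) * (d - k)" using assms(1) by simp
  also have "\<dots> = (d - k) * (S + (k - j))" by (simp add: algebra_simps)
  also have "\<dots> \<le> (d - k) * T" using T by simp
  finally show ?thesis .
qed



lemma katona_level:
  assumes X: "finite X" "card X = d" and Bsub: "\<B> \<subseteq> Pow X"
    and down: "\<And>B C. B \<in> \<B> \<Longrightarrow> C \<subseteq> B \<Longrightarrow> C \<in> \<B>"
    and nc: "\<And>B B'. B \<in> \<B> \<Longrightarrow> B' \<in> \<B> \<Longrightarrow> B \<union> B' \<noteq> X"
    and kj: "d \<le> 2*k" "1 \<le> j" "j + k + 1 = d"
  shows "card {B\<in>\<B>. card B = k} \<le> card {B\<in>\<B>. card B = j}"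
proof -
  obtain e where e: "bij_betw e {..<d} X"
    using ex_bij_betw_nat_finite[OF X(1)] X(2) by (auto simp: lessThan_atLeast0)
  define Sp where "Sp p = {s. s < d \<and> p ` e ` arc d s k \<in> \<B>}" for p
  define Tp where "Tp p = {s. s < d \<and> p ` e ` arc d s j \<in> \<B>}" for p
  have kd: "k < d" "j \<le> k" using kj by auto
  have per: "(k+1) * card (Sp p) \<le> (d-k) * card (Tp p)" if p: "p permutes X" for p
  proof -
    have Ssub: "Sp p \<subseteq> {..<d}" unfolding Sp_def by auto
    have eX: "e ` {..<d} = X" using e by (simp add: bij_betw_def)
    have img: "p ` e ` {..<d} = X" unfolding eX using permutes_image[OF p] .
    have H: "\<not> (d - k \<le> cd d s s' \<and> cd d s s' \<le> d - (d - k))" if s: "s \<in> Sp p" "s' \<in> Sp p" for s s'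
    proof
      assume a: "d - k \<le> cd d s s' \<and> cd d s s' \<le> d - (d - k)"
      have "arc d s k \<union> arc d s' k = {..<d}"
        by (rule arc_cover) (use s a kd in \<open>auto simp: Sp_def\<close>)
      then have "p ` e ` arc d s k \<union> p ` e ` arc d s' k = X" using img by (simp add: image_Un[symmetric])
      moreover have "p ` e ` arc d s k \<in> \<B>" "p ` e ` arc d s' k \<in> \<B>" using s unfolding Sp_def by auto
      ultimately show False using nc by blast
    qed
    have cS: "card (Sp p) \<le> d - k"
      by (rule katona_circle[OF Ssub]) (use H kd kj in auto)
    have TU: "{x. x < d \<and> (\<exists>s\<in>Sp p. cd d s x \<le> k - j)} \<subseteq> Tp p"
    proof
      fix x assume "x \<in> {x. x < d \<and> (\<exists>s\<in>Sp p. cd d s x \<le> k - j)}"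
      then obtain s where x: "x < d" and s: "s \<in> Sp p" and sx: "cd d s x \<le> k - j" by auto
      have sd: "s < d" using s unfolding Sp_def by auto
      have "arc d x j \<subseteq> arc d s k"
      proof
        fix y assume "y \<in> arc d x j"
        then have y: "y < d" "cd d x y < j" unfolding arc_def by auto
        have "cd d s y \<le> cd d s x + cd d x y" by (rule cd_tri[OF sd x y(1)])
        then have "cd d s y < k" using sx y kd by linarith
        then show "y \<in> arc d s k" using y unfolding arc_def by auto
      qed
      then have "p ` e ` arc d x j \<subseteq> p ` e ` arc d s k" by (intro image_mono)
      moreover have "p ` e ` arc d s k \<in> \<B>" using s unfolding Sp_def by auto
      ultimately have "p ` e ` arc d x j \<in> \<B>" using down by blast
      then show "x \<in> Tp p" using x unfolding Tp_def by auto
    qed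
    have fT: "finite (Tp p)" unfolding Tp_def by auto
    show ?thesis
    proof (cases "Sp p = {}")
      case True then show ?thesis by simp
    next
      case False
      have "min d (card (Sp p) + (k - j)) \<le> card {x. x < d \<and> (\<exists>s\<in>Sp p. cd d s x \<le> k - j)}"
        by (rule sumset[OF Ssub False])
      also have "\<dots> \<le> card (Tp p)" by (rule card_mono[OF fT TU])
      finally show ?thesis using per_perm_arith[OF cS _ kj(3) kj(1)] by simp
    qed
  qed
  define P where "P = {p. p permutes X}"
  have sumle: "(k+1) * (\<Sum>p\<in>P. card (Sp p)) \<le> (d-k) * (\<Sum>p\<in>P. card (Tp p))"
    unfolding sum_distrib_left by (rule sum_mono) (use per in \<open>auto simp: P_def\<close>)
  have dck: "(\<Sum>p\<in>P. card (Sp p)) * (d choose k) = d * (card {B\<in>\<B>. card B = k} * fact d)"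
    unfolding P_def Sp_def by (rule double_count[OF X Bsub e]) (use kd in auto)
  have dcj: "(\<Sum>p\<in>P. card (Tp p)) * (d choose j) = d * (card {B\<in>\<B>. card B = j} * fact d)"
    unfolding P_def Tp_def by (rule double_count[OF X Bsub e]) (use kj in auto)
  have b1: "(d - k) * (d choose k) = d * ((d - 1) choose k)" by (rule binomial_absorb_comp)
  have b2: "Suc k * (d choose Suc k) = d * ((d - 1) choose k)" by (rule binomial_absorption)
  have b3: "d choose j = d choose Suc k"
  proof -
    have "d - j = Suc k" using kj by simp
    then show ?thesis using binomial_symmetric[of j d] kj by simp
  qed
  define M where "M = d * ((d - 1) choose k)"
  have Mpos: "0 < M" unfolding M_def using kd by (simp add: zero_less_binomial_iff)
  have "(k+1) * (\<Sum>p\<in>P. card (Sp p)) * ((d choose k) * (d choose j))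
        \<le> (d-k) * (\<Sum>p\<in>P. card (Tp p)) * ((d choose k) * (d choose j))"
    using sumle by (rule mult_right_mono) simp
  also have "(k+1) * (\<Sum>p\<in>P. card (Sp p)) * ((d choose k) * (d choose j))
      = ((k+1) * (d choose j)) * ((\<Sum>p\<in>P. card (Sp p)) * (d choose k))" by (simp add: algebra_simps)
  also have "\<dots> = M * (d * (card {B\<in>\<B>. card B = k} * fact d))" unfolding dck b3 using b2 M_def by simp
  also have "(d-k) * (\<Sum>p\<in>P. card (Tp p)) * ((d choose k) * (d choose j))
      = ((d-k) * (d choose k)) * ((\<Sum>p\<in>P. card (Tp p)) * (d choose j))" by (simp add: algebra_simps)
  also have "\<dots> = M * (d * (card {B\<in>\<B>. card B = j} * fact d))" unfolding dcj b1 M_def by simp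
  finally have "M * d * fact d * card {B\<in>\<B>. card B = k} \<le> M * d * fact d * card {B\<in>\<B>. card B = j}"
    by (simp add: algebra_simps)
  moreover have "0 < M * d * fact d" using Mpos kd by simp
  ultimately show ?thesis by simp
qed



lemma level_ineq:
  fixes c :: "nat \<Rightarrow> nat" and m d :: nat
  assumes d: "2 \<le> d" and m: "1 \<le> m" and c0: "c 0 = 1" and cd1: "c (d-1) = 0" and cdd: "c d = 0"
    and K: "\<And>k j. d \<le> 2*k \<Longrightarrow> 1 \<le> j \<Longrightarrow> j + k + 1 = d \<Longrightarrow> c k \<le> c j"
  shows "m * (\<Sum>k\<le>d. c k * m^k) + m^d \<le> (\<Sum>k\<le>d. c k * m^(d-k)) + m"
proof -
  define w where "w k = int m ^ (d - k) - int m ^ (k + 1)" for k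
  define c' where "c' k = (if 1 \<le> k \<and> k \<le> d - 2 then c k else 0)" for k
  have split: "int (c k) * w k = int (c' k) * w k + (if k = 0 then w 0 else 0)" if "k \<le> d" for k
    using that c0 cd1 cdd unfolding c'_def
    by (cases "k = 0"; cases "k = d - 1"; cases "k = d") auto
  have "(\<Sum>k\<le>d. int (c k) * w k) = (\<Sum>k\<le>d. int (c' k) * w k) + (\<Sum>k\<le>d. (if k = 0 then w 0 else 0))"
    by (simp add: split sum.distrib)
  also have "(\<Sum>k\<le>d. (if k = 0 then w 0 else (0::int))) = w 0"
    by (simp add: sum.delta)
  also have "(\<Sum>k\<le>d. int (c' k) * w k) = (\<Sum>k<d. int (c' k) * w k)"
  proof -
    have "c' d = 0" unfolding c'_def using d by auto
    then show ?thesis by (simp add: lessThan_Suc_atMost[symmetric])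
  qed
  finally have eq1: "(\<Sum>k\<le>d. int (c k) * w k) = (\<Sum>k<d. int (c' k) * w k) + w 0" .
  have wsym: "w (d - Suc k) = - w k" if "k < d" for k
    using that unfolding w_def by (simp add: Suc_diff_Suc)
  have "(\<Sum>k<d. int (c' k) * w k) = (\<Sum>k<d. int (c' (d - Suc k)) * w (d - Suc k))"
    by (rule sum.nat_diff_reindex[symmetric])
  also have "\<dots> = (\<Sum>k<d. - (int (c' (d - Suc k)) * w k))"
    by (rule sum.cong[OF refl]) (simp add: wsym)
  finally have eqA: "(\<Sum>k<d. int (c' k) * w k) = - (\<Sum>k<d. int (c' (d - Suc k)) * w k)"
    by (simp add: sum_negf)
  have "(\<Sum>k<d. (int (c' k) - int (c' (d - Suc k))) * w k) = (\<Sum>k<d. int (c' k) * w k) - (\<Sum>k<d. int (c' (d - Suc k)) * w k)"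
    by (simp add: sum_subtractf left_diff_distrib)
  then have eq2: "2 * (\<Sum>k<d. int (c' k) * w k) = (\<Sum>k<d. (int (c' k) - int (c' (d - Suc k))) * w k)"
    using eqA by simp
  have trm: "0 \<le> (int (c' k) - int (c' (d - Suc k))) * w k" if k: "k < d" for k
  proof (cases "k = 0 \<or> k = d - 1")
    case True
    then have "c' k = 0" "c' (d - Suc k) = 0" using d unfolding c'_def by auto
    then show ?thesis by simp
  next
    case False
    then have kk: "1 \<le> k" "k \<le> d - 2" using k by auto
    then have cc: "c' k = c k" "c' (d - Suc k) = c (d - Suc k)" unfolding c'_def using d by auto
    show ?thesis
    proof (cases "d \<le> 2 * k")
      case True
      have "c k \<le> c (d - Suc k)" by (rule K[OF True]) (use kk d in auto)
      moreover have "int m ^ (d - k) \<le> int m ^ (k + 1)"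
        by (rule power_increasing) (use True m in auto)
      ultimately show ?thesis unfolding cc w_def by (intro mult_nonpos_nonpos) auto
    next
      case False
      show ?thesis
      proof (cases "d \<le> 2 * (d - Suc k)")
        case True
        have "c (d - Suc k) \<le> c k" by (rule K[OF True]) (use kk d in auto)
        moreover have "int m ^ (k + 1) \<le> int m ^ (d - k)"
          by (rule power_increasing) (use False m in auto)
        ultimately show ?thesis unfolding cc w_def by (intro mult_nonneg_nonneg) auto
      next
        case False2: False
        then have "d - Suc k = k" using False k by linarith
        then show ?thesis by simp
      qed
    qed
  qed
  have "0 \<le> (\<Sum>k<d. int (c' k) * w k)"
    using eq2 sum_nonneg[of "{..<d}" "\<lambda>k. (int (c' k) - int (c' (d - Suc k))) * w k"] trm by simp
  then have main: "w 0 \<le> (\<Sum>k\<le>d. int (c k) * w k)" using eq1 by simp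
  have "(\<Sum>k\<le>d. int (c k) * w k) = int (\<Sum>k\<le>d. c k * m^(d-k)) - int (m * (\<Sum>k\<le>d. c k * m^k))"
    unfolding w_def by (simp add: sum_subtractf sum_distrib_left algebra_simps)
  moreover have "w 0 = int (m ^ d) - int m" unfolding w_def by simp
  ultimately show ?thesis using main by linarith
qed



lemma sum_pow_card_Pow:
  fixes m :: nat
  assumes "finite A" shows "(\<Sum>X\<in>Pow A. m ^ card X) = (m + 1) ^ card A"
  using assms
proof (induction A rule: finite_induct)
  case empty then show ?case by simp
next
  case (insert a A)
  have disj: "Pow A \<inter> insert a ` Pow A = {}" using insert.hyps by auto
  have inj: "inj_on (insert a) (Pow A)" using insert.hyps by (auto simp: inj_on_def)
  have "(\<Sum>X\<in>Pow (insert a A). m ^ card X) = (\<Sum>X\<in>Pow A. m ^ card X) + (\<Sum>X\<in>insert a ` Pow A. m ^ card X)"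
    unfolding Pow_insert by (rule sum.union_disjoint) (use insert.hyps disj in auto)
  also have "(\<Sum>X\<in>insert a ` Pow A. m ^ card X) = (\<Sum>X\<in>Pow A. m ^ card (insert a X))"
    by (subst sum.reindex[OF inj]) simp
  also have "\<dots> = (\<Sum>X\<in>Pow A. m * m ^ card X)"
  proof (rule sum.cong[OF refl])
    fix X assume "X \<in> Pow A"
    then have "finite X" "a \<notin> X" using insert.hyps finite_subset by auto
    then show "m ^ card (insert a X) = m * m ^ card X" by simp
  qed
  finally show ?case using insert by (simp add: sum_distrib_left[symmetric] algebra_simps)
qed

lemma cover_lift: "S \<subseteq> insert r D \<Longrightarrow> S' \<subseteq> insert r D \<Longrightarrow> r \<in> S \<Longrightarrow> (S - {r}) \<union> (S' - {r}) = D \<Longrightarrow> S \<union> S' = insert r D" by blast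
lemma cover_lift1: "S \<subseteq> insert r D \<Longrightarrow> i \<in> D \<Longrightarrow> r \<in> S \<Longrightarrow> (S - {r}) \<union> {i} = D \<Longrightarrow> S \<union> {i} = insert r D" by blast
lemma cover_lift2: "A \<subseteq> D \<Longrightarrow> S \<subseteq> insert r D \<Longrightarrow> r \<in> S \<Longrightarrow> A = D - (S - {r}) \<Longrightarrow> A \<union> S = insert r D" by blast

lemma weighted_hm:
  fixes m r :: nat and \<S> :: "nat set set"
  assumes r: "3 \<le> r" and m: "1 \<le> m" and Ssub: "\<S> \<subseteq> Pow {1..r}"
    and down: "\<And>S T. S \<in> \<S> \<Longrightarrow> T \<subseteq> S \<Longrightarrow> T \<in> \<S>"
    and nc: "\<And>S T. S \<in> \<S> \<Longrightarrow> T \<in> \<S> \<Longrightarrow> S \<union> T \<noteq> {1..r}"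
    and sing: "\<And>l. l \<in> {1..r} \<Longrightarrow> {l} \<in> \<S>"
  shows "(\<Sum>S\<in>\<S>. m ^ card S) + m ^ (r - 1) \<le> (m + 1) ^ (r - 1) + m"
proof -
  define d where "d = r - 1"
  have d2: "2 \<le> d" using r d_def by simp
  have rU: "{1..r} = insert r {1..d}" using r d_def by auto
  have rnot: "r \<notin> {1..d}" using d_def r by auto
  have fS: "finite \<S>" using finite_subset[OF Ssub] by simp
  define \<A> where "\<A> = {S\<in>\<S>. r \<notin> S}"
  define \<S>1 where "\<S>1 = {S\<in>\<S>. r \<in> S}"
  define \<B> where "\<B> = (\<lambda>S. S - {r}) ` \<S>1"
  have fA: "finite \<A>" "finite \<S>1" using fS unfolding \<A>_def \<S>1_def by auto
  have fB: "finite \<B>" unfolding \<B>_def using fA by simp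
  have S1sub: "S \<subseteq> {1..r}" if "S \<in> \<S>" for S using Ssub that by auto
  have Asub: "\<A> \<subseteq> Pow {1..d}" unfolding \<A>_def using S1sub rU by auto
  have Bsub: "\<B> \<subseteq> Pow {1..d}" unfolding \<B>_def \<S>1_def using S1sub rU by auto
  have sum1: "(\<Sum>S\<in>\<S>. m ^ card S) = (\<Sum>S\<in>\<A>. m ^ card S) + (\<Sum>S\<in>\<S>1. m ^ card S)"
  proof -
    have "\<S> = \<A> \<union> \<S>1" "\<A> \<inter> \<S>1 = {}" unfolding \<A>_def \<S>1_def by auto
    then show ?thesis using fA by (simp add: sum.union_disjoint)
  qed
  have injr: "inj_on (\<lambda>S. S - {r}) \<S>1" unfolding \<S>1_def inj_on_def by (metis insert_Diff mem_Collect_eq)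
  have sum2: "(\<Sum>S\<in>\<S>1. m ^ card S) = m * (\<Sum>B\<in>\<B>. m ^ card B)"
  proof -
    have "(\<Sum>B\<in>\<B>. m * m ^ card B) = (\<Sum>S\<in>\<S>1. m * m ^ card (S - {r}))"
      unfolding \<B>_def by (subst sum.reindex[OF injr]) simp
    also have "\<dots> = (\<Sum>S\<in>\<S>1. m ^ card S)"
    proof (rule sum.cong[OF refl])
      fix S assume S: "S \<in> \<S>1"
      then have "finite S" "r \<in> S" using S1sub unfolding \<S>1_def by (auto intro: finite_subset)
      then have "card S = Suc (card (S - {r}))" by (metis card_Suc_Diff1)
      then show "m * m ^ card (S - {r}) = m ^ card S" by simp
    qed
    finally show ?thesis by (simp add: sum_distrib_left)
  qed
  have Bdown: "C \<in> \<B>" if b: "B \<in> \<B>" and "C \<subseteq> B" for B C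
  proof -
    obtain S where S: "S \<in> \<S>" "r \<in> S" "B = S - {r}" using b unfolding \<B>_def \<S>1_def by auto
    have "insert r C \<subseteq> S" using S that(2) by auto
    then have "insert r C \<in> \<S>1" using down S unfolding \<S>1_def by auto
    moreover have "r \<notin> C" using that S by auto
    ultimately have "insert r C - {r} \<in> \<B>" unfolding \<B>_def by blast
    then show ?thesis using \<open>r \<notin> C\<close> by simp
  qed
  have Bnc0: "B \<union> B' \<noteq> {1..d}" if b: "B \<in> \<B>" and b': "B' \<in> \<B>" for B B'
  proof
    assume e: "B \<union> B' = {1..d}"
    obtain S where S: "S \<in> \<S>" "r \<in> S" "B = S - {r}" using b unfolding \<B>_def \<S>1_def by auto
    obtain S' where S': "S' \<in> \<S>" "r \<in> S'" "B' = S' - {r}" using b' unfolding \<B>_def \<S>1_def by auto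
    have "S \<union> S' = {1..r}" unfolding rU by (rule cover_lift) (use e S S' S1sub rU in auto)
    then show False using nc S(1) S'(1) by blast
  qed
  have Bsing: "B \<union> {i} \<noteq> {1..d}" if b: "B \<in> \<B>" and "i \<in> {1..d}" for B i
  proof
    assume e: "B \<union> {i} = {1..d}"
    obtain S where S: "S \<in> \<S>" "r \<in> S" "B = S - {r}" using b unfolding \<B>_def \<S>1_def by auto
    have "S \<union> {i} = {1..r}" unfolding rU by (rule cover_lift1) (use e S S1sub rU that(2) in auto)
    moreover have "{i} \<in> \<S>" using sing that(2) d_def by auto
    ultimately show False using nc S(1) by blast
  qed
  have emptyB: "{} \<in> \<B>"
  proof -
    have "{r} \<in> \<S>1" using sing r unfolding \<S>1_def by auto
    then show ?thesis unfolding \<B>_def by force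
  qed
  define c where "c k = card {B\<in>\<B>. card B = k}" for k
  have c0: "c 0 = 1"
  proof -
    have "{B\<in>\<B>. card B = 0} = {{}}"
    proof (intro equalityI subsetI)
      fix B assume "B \<in> {B\<in>\<B>. card B = 0}"
      then have b: "B \<in> \<B>" and cb: "card B = 0" by auto
      have "B \<subseteq> {1..d}" using Bsub b by auto
      then have "finite B" by (rule finite_subset) simp
      then show "B \<in> {{}}" using cb by simp
    qed (use emptyB in auto)
    then show ?thesis unfolding c_def by simp
  qed
  have big: "card B < d - 1" if "B \<in> \<B>" for B
  proof (rule ccontr)
    assume "\<not> card B < d - 1"
    then have cb: "d - 1 \<le> card B" by simp
    have Bs: "B \<subseteq> {1..d}" using that Bsub by auto
    have "finite B" using Bs by (rule finite_subset) simp
    then have "card ({1..d} - B) = d - card B" using Bs by (simp add: card_Diff_subset)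
    then have c1: "card ({1..d} - B) \<le> 1" using cb by simp
    show False
    proof (cases "{1..d} - B = {}")
      case True
      then have "B \<union> {1} = {1..d}" using Bs d2 by auto
      then show False using Bsing[OF that, of 1] d2 by auto
    next
      case False
      have "card ({1..d} - B) \<noteq> 0" using False by simp
      then have "card ({1..d} - B) = 1" using c1 by linarith
      then obtain i where i: "{1..d} - B = {i}" by (rule card_1_singletonE)
      then have "B \<union> {i} = {1..d}" "i \<in> {1..d}" using Bs by auto
      then show False using Bsing[OF that] by auto
    qed
  qed
  have e1: "{B\<in>\<B>. card B = d - 1} = {}" "{B\<in>\<B>. card B = d} = {}" by (auto dest: big)
  have cd1: "c (d - 1) = 0" "c d = 0" unfolding c_def e1 by simp_all
  have K: "c k \<le> c j" if "d \<le> 2*k" "1 \<le> j" "j + k + 1 = d" for k j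
    unfolding c_def by (rule katona_level[of "{1..d}" d]) (use Bsub Bdown Bnc0 that in auto)
  have lv: "m * (\<Sum>k\<le>d. c k * m^k) + m^d \<le> (\<Sum>k\<le>d. c k * m^(d-k)) + m"
    by (rule level_ineq[OF d2 m c0 cd1 K])
  have cardB: "card ` \<B> \<subseteq> {..d}"
  proof
    fix x assume "x \<in> card ` \<B>"
    then obtain B where "B \<in> \<B>" "x = card B" by auto
    then show "x \<in> {..d}" using big by fastforce
  qed
  have W1: "(\<Sum>B\<in>\<B>. m ^ card B) = (\<Sum>k\<le>d. c k * m^k)"
    unfolding c_def using sum_fun_comp[OF fB _ cardB, of "\<lambda>k. m ^ k"] by simp
  have W2: "(\<Sum>B\<in>\<B>. m ^ (d - card B)) = (\<Sum>k\<le>d. c k * m^(d-k))"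
    unfolding c_def using sum_fun_comp[OF fB _ cardB, of "\<lambda>k. m ^ (d - k)"] by simp
  define \<C> where "\<C> = (\<lambda>B. {1..d} - B) ` \<B>"
  have injc: "inj_on (\<lambda>B. {1..d} - B) \<B>" using Bsub unfolding inj_on_def by blast
  have sumC: "(\<Sum>C\<in>\<C>. m ^ card C) = (\<Sum>B\<in>\<B>. m ^ (d - card B))"
    unfolding \<C>_def
  proof (subst sum.reindex[OF injc], rule sum.cong[OF refl])
    fix B assume "B \<in> \<B>"
    then have "B \<subseteq> {1..d}" using Bsub by auto
    moreover have "finite B" using \<open>B \<subseteq> {1..d}\<close> by (rule finite_subset) simp
    ultimately show "((\<lambda>C. m ^ card C) \<circ> (\<lambda>B. {1..d} - B)) B = m ^ (d - card B)"
      by (simp add: card_Diff_subset)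
  qed
  have AC: "\<A> \<inter> \<C> = {}"
  proof (rule ccontr)
    assume "\<A> \<inter> \<C> \<noteq> {}"
    then obtain A B where A: "A \<in> \<A>" and B: "B \<in> \<B>" and AB: "A = {1..d} - B" unfolding \<C>_def by auto
    obtain S where S: "S \<in> \<S>" "r \<in> S" "B = S - {r}" using B unfolding \<B>_def \<S>1_def by auto
    have "A \<union> S = {1..r}" unfolding rU by (rule cover_lift2) (use AB S S1sub rU A Asub in auto)
    then show False using nc A S(1) unfolding \<A>_def by blast
  qed
  have Csub: "\<C> \<subseteq> Pow {1..d}" unfolding \<C>_def by auto
  have fC: "finite \<C>" unfolding \<C>_def using fB by simp
  have "(\<Sum>S\<in>\<A>. m ^ card S) + (\<Sum>C\<in>\<C>. m ^ card C) = (\<Sum>S\<in>\<A> \<union> \<C>. m ^ card S)"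
    using AC fA fC by (simp add: sum.union_disjoint)
  also have "\<dots> \<le> (\<Sum>S\<in>Pow {1..d}. m ^ card S)"
    by (rule sum_mono2) (use Asub Csub in auto)
  also have "\<dots> = (m + 1) ^ d" using sum_pow_card_Pow[of "{1..d}" m] by simp
  finally have Abound: "(\<Sum>S\<in>\<A>. m ^ card S) + (\<Sum>B\<in>\<B>. m ^ (d - card B)) \<le> (m + 1) ^ d"
    unfolding sumC .
  show ?thesis
    unfolding d_def[symmetric] sum1 sum2 W1 using lv W2 Abound by linarith
qed

definition supp :: "nat \<Rightarrow> (nat \<Rightarrow> nat) \<Rightarrow> nat set" where
  "supp r A = {l\<in>{1..r}. A l \<noteq> 1}"

lemma shift_closed:
  assumes Fc: "F \<subseteq> cube r n" and sh: "cw_shifted r n F" and A: "A \<in> F" and l: "l \<in> {1..r}"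
  shows "A(l := 1) \<in> F"
proof (cases "A l = 1")
  case True
  then show ?thesis using A by (simp add: fun_upd_idem)
next
  case False
  have "A \<in> cube r n" using Fc A by auto
  then have "A l \<in> {1..n}" using l unfolding cube_def by (auto simp: PiE_iff)
  then have j: "A l \<in> {2..n}" using False by auto
  have eq: "shift_family l (A l) F = F" using sh l j unfolding cw_shifted_def by blast
  show ?thesis
  proof (rule ccontr)
    assume nA: "A(l := 1) \<notin> F"
    then have "shift l (A l) F A = A(l := 1)" unfolding shift_def by simp
    then have "A(l := 1) \<in> shift_family l (A l) F" unfolding shift_family_def using A by force
    then show False using eq nA by simp
  qed
qed

lemma reset_closed:
  assumes Fc: "F \<subseteq> cube r n" and sh: "cw_shifted r n F" and A: "A \<in> F"
    and Z: "finite Z" "Z \<subseteq> {1..r}"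
  shows "(\<lambda>l. if l \<in> Z then 1 else A l) \<in> F"
  using Z
proof (induction Z rule: finite_induct)
  case empty then show ?case using A by simp
next
  case (insert z Z)
  have "(\<lambda>l. if l \<in> Z then 1 else A l) \<in> F" using insert by simp
  then have "(\<lambda>l. if l \<in> Z then 1 else A l)(z := 1) \<in> F"
    using shift_closed[OF Fc sh] insert.prems by simp
  moreover have "(\<lambda>l. if l \<in> Z then 1 else A l)(z := 1) = (\<lambda>l. if l \<in> insert z Z then 1 else A l)"
    by (rule ext) simp
  ultimately show ?case by simp
qed

lemma supp_reset: "supp r (\<lambda>l. if l \<in> Z then 1 else A l) = supp r A - Z"
  unfolding supp_def by auto

lemma card_supp_class:
  assumes n: "2 \<le> n" and S: "S \<subseteq> {1..r}"
  shows "card {A\<in>cube r n. supp r A = S} = (n - 1) ^ card S"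
proof -
  have eq: "{A\<in>cube r n. supp r A = S} = PiE {1..r} (\<lambda>l. if l \<in> S then {2..n} else {1})"
  proof (intro equalityI subsetI)
    fix A assume "A \<in> {A\<in>cube r n. supp r A = S}"
    then have A: "A \<in> PiE {1..r} (\<lambda>_. {1..n})" "supp r A = S" unfolding cube_def by auto
    show "A \<in> PiE {1..r} (\<lambda>l. if l \<in> S then {2..n} else {1})"
    proof (rule PiE_I)
      fix l assume l: "l \<in> {1..r}"
      have "A l \<in> {1..n}" using A(1) l by (auto simp: PiE_iff)
      moreover have "l \<in> S \<longleftrightarrow> A l \<noteq> 1" using A(2) l unfolding supp_def by auto
      ultimately show "A l \<in> (if l \<in> S then {2..n} else {1})" by auto
    next
      fix l assume "l \<notin> {1..r}" then show "A l = undefined" using A(1) by (auto simp: PiE_def extensional_def)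
    qed
  next
    fix A assume A: "A \<in> PiE {1..r} (\<lambda>l. if l \<in> S then {2..n} else {1})"
    have "A \<in> cube r n" unfolding cube_def
    proof (rule PiE_I)
      fix l assume l: "l \<in> {1..r}"
      then have "A l \<in> (if l \<in> S then {2..n} else {1})" using A by (auto simp: PiE_iff)
      then show "A l \<in> {1..n}" using n by (auto split: if_splits)
    next
      fix l assume "l \<notin> {1..r}" then show "A l = undefined" using A by (auto simp: PiE_def extensional_def)
    qed
    moreover have "supp r A = S"
    proof (intro equalityI subsetI)
      fix l assume "l \<in> supp r A"
      then have l: "l \<in> {1..r}" "A l \<noteq> 1" unfolding supp_def by auto
      then have "A l \<in> (if l \<in> S then {2..n} else {1})" using A by (auto simp: PiE_iff)
      then show "l \<in> S" using l by (auto split: if_splits)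
    next
      fix l assume l: "l \<in> S"
      then have "l \<in> {1..r}" using S by auto
      then have "A l \<in> (if l \<in> S then {2..n} else {1})" using A unfolding PiE_iff by blast
      then have "A l \<in> {2..n}" using l by simp
      then show "l \<in> supp r A" using \<open>l \<in> {1..r}\<close> unfolding supp_def by auto
    qed
    ultimately show "A \<in> {A\<in>cube r n. supp r A = S}" by simp
  qed
  have "card (PiE {1..r} (\<lambda>l. if l \<in> S then {2..n} else {1})) = (\<Prod>l\<in>{1..r}. card (if l \<in> S then {2..n} else {1::nat}))"
    by (rule card_PiE) simp
  also have "\<dots> = (\<Prod>l\<in>{1..r}. if l \<in> S then n - 1 else 1)"
    by (rule prod.cong[OF refl]) auto
  also have "\<dots> = (n - 1) ^ card ({1..r} \<inter> S)"
    by (simp add: prod.If_cases Int_def)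
  also have "{1..r} \<inter> S = S" using S by auto
  finally show ?thesis unfolding eq .
qed

theorem lemma2p5:
  fixes r n :: nat and F :: "(nat \<Rightarrow> nat) set"
  assumes "r \<ge> 3" and "n \<ge> 2"
    and "F \<subseteq> cube r n"
    and "cw_shifted r n F" and "intersecting r F" and "nontrivial r F"
    and "\<forall>G. G \<subseteq> cube r n \<and> cw_shifted r n G \<and> intersecting r G \<and> nontrivial r G
           \<longrightarrow> card G \<le> card F"
  shows "card F \<le> n ^ (r - 1) - (n - 1) ^ (r - 1) + n - 1"
proof -
  note r = assms(1) and n = assms(2) and Fc = assms(3) and sh = assms(4)
    and inter = assms(5) and ntr = assms(6)
  define \<S> where "\<S> = supp r ` F"
  define m where "m = n - 1"
  have m1: "1 \<le> m" using n m_def by simp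
  have fin_cube: "finite (cube r n)" unfolding cube_def by (rule finite_PiE) auto
  have fF: "finite F" using finite_subset[OF Fc fin_cube] .
  have Ssub: "\<S> \<subseteq> Pow {1..r}" unfolding \<S>_def supp_def by auto
  have reset: "(\<lambda>l. if l \<in> Z then 1 else A l) \<in> F" if "A \<in> F" "Z \<subseteq> {1..r}" for A Z
    using reset_closed[OF Fc sh that(1) finite_subset[OF that(2) finite_atLeastAtMost] that(2)] .
  have down: "T \<in> \<S>" if s1: "S \<in> \<S>" and "T \<subseteq> S" for S T
  proof -
    obtain A where A: "A \<in> F" "S = supp r A" using s1 unfolding \<S>_def by auto
    have "supp r A - T \<subseteq> {1..r}" unfolding supp_def by auto
    then have X: "(\<lambda>l. if l \<in> supp r A - T then 1 else A l) \<in> F" by (rule reset[OF A(1)])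
    have Y: "supp r (\<lambda>l. if l \<in> supp r A - T then 1 else A l) = T"
      unfolding supp_reset using A that(2) by auto
    show ?thesis unfolding \<S>_def by (rule image_eqI[where f="supp r", OF Y[symmetric] X])
  qed
  have nc: "S \<union> T \<noteq> {1..r}" if s1: "S \<in> \<S>" and s2: "T \<in> \<S>" for S T
  proof
    assume e: "S \<union> T = {1..r}"
    obtain A where A: "A \<in> F" "S = supp r A" using s1 unfolding \<S>_def by auto
    obtain B where B: "B \<in> F" "T = supp r B" using s2 unfolding \<S>_def by auto
    define B' where "B' = (\<lambda>l. if l \<in> supp r A then 1 else B l)"
    have B'F: "B' \<in> F" unfolding B'_def by (rule reset[OF B(1)]) (auto simp: supp_def)
    have "\<exists>l\<in>{1..r}. A l = B' l" using inter A(1) B'F unfolding intersecting_def by blast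
    then obtain l where l1: "l \<in> {1..r}" and l2: "A l = B' l" by blast
    show False
    proof (cases "l \<in> supp r A")
      case True
      have "B' l = 1" unfolding B'_def using True by simp
      moreover have "A l \<noteq> 1" using True unfolding supp_def by simp
      ultimately show False using l2 by simp
    next
      case False
      have "A l = 1" using l1 False unfolding supp_def by simp
      moreover have "B' l = B l" unfolding B'_def using False by simp
      ultimately have "B l = 1" using l2 by simp
      then have "l \<notin> T" using B(2) unfolding supp_def by simp
      moreover have "l \<notin> S" using False A(2) by simp
      ultimately show False using e l1 by blast
    qed
  qed
  have sing: "{l} \<in> \<S>" if l: "l \<in> {1..r}" for l
  proof -
    obtain A B where AB: "A \<in> F" "B \<in> F" "A l \<noteq> B l" using ntr l unfolding nontrivial_def by blast
    then have "l \<in> supp r A \<or> l \<in> supp r B" using l unfolding supp_def by auto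
    then obtain C where C: "C \<in> F" "l \<in> supp r C" using AB by blast
    have "supp r C \<in> \<S>" using C unfolding \<S>_def by auto
    then show ?thesis using down C(2) by blast
  qed
  have W: "(\<Sum>S\<in>\<S>. m ^ card S) + m ^ (r - 1) \<le> (m + 1) ^ (r - 1) + m"
    by (rule weighted_hm[OF r m1 Ssub down nc sing]) auto
  have fS: "finite \<S>" unfolding \<S>_def using fF by simp
  have "F \<subseteq> (\<Union>S\<in>\<S>. {A\<in>cube r n. supp r A = S})" using Fc unfolding \<S>_def by auto
  then have "card F \<le> card (\<Union>S\<in>\<S>. {A\<in>cube r n. supp r A = S})"
    by (rule card_mono[rotated]) (use fS fin_cube in auto)
  also have "\<dots> \<le> (\<Sum>S\<in>\<S>. card {A\<in>cube r n. supp r A = S})" by (rule card_UN_le[OF fS])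
  also have "\<dots> = (\<Sum>S\<in>\<S>. m ^ card S)"
  proof (rule sum.cong[OF refl])
    fix S assume "S \<in> \<S>"
    then have "S \<subseteq> {1..r}" using Ssub by auto
    then show "card {A\<in>cube r n. supp r A = S} = m ^ card S" unfolding m_def by (rule card_supp_class[OF n])
  qed
  finally have cF: "card F \<le> (\<Sum>S\<in>\<S>. m ^ card S)" .
  have nm: "n = m + 1" using n m_def by simp
  have "m ^ (r - 1) \<le> n ^ (r - 1)" using nm by (simp add: power_mono)
  moreover have W': "(\<Sum>S\<in>\<S>. m ^ card S) + m ^ (r - 1) \<le> n ^ (r - 1) + m" using W nm by simp
  moreover have "(n - 1) ^ (r - 1) = m ^ (r - 1)" using m_def by simp
  ultimately show ?thesis using cF nm by linarith
qed

end
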